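(* Let $M$ be a manifold of dimension $n\ge3$ with pseudo-Riemannian metric $g$, and let $(\nabla,g,\nabla^* )$ be a conjugate triple of torsion free connections with $\nabla^*$ Ricci symmetric. Then the symmetric bilinear form $B^*:=(n-1)Ric+Ric^*-\tau g$ is gauge invariant: for every smooth $q>0$, if $(\nabla^\sharp,g^\sharp,\nabla^{*\sharp})$ is the gauge transformed triple, then $(n-1)Ric(\nabla^\sharp)+Ric(\nabla^{*\sharp})-\tau^\sharp g^\sharp=B^*$, where $\tau^\sharp$ is the $g^\sharp$-trace of $Ric(\nabla^\sharp)$.
   Context: Conjugate triple: $u\,g(v,w)=g(\nabla_uv,w)+g(v,\nabla^*_uw)$. $Ric:=Ric(\nabla)$, $Ric^*:=Ric(\nabla^* )$, where $Ric(\nabla)(x,y)=\mathrm{Tr}(z\mapsto\mathcal{R}(z,x)y)$ with $\mathcal{R}(u,v)=\nabla_u\nabla_v-\nabla_v\nabla_u-\nabla_{[u,v]}$; Ricci symmetric means the Ricci tensor is symmetric; $\tau$ is the $g$-trace of $Ric$. Gauge transformation with transition function $q>0$: $g^\sharp=q\,g$, $\nabla^{*\sharp}_vw=\nabla^*_vw+(d\ln q)(v)w+(d\ln q)(w)v$, and $\nabla^\sharp$ is the connection making $(\nabla^\sharp,g^\sharp,\nabla^{*\sharp})$ conjugate. *)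

theory Defs
  imports "HOL-Analysis.Analysis"
begin

text \<open>Local coordinate formulation on an open chart domain U in R^n (index type 'n).
  A metric is given by components g x i j = g(d_i,d_j) at x; a connection by its
  Christoffel symbols G x i j k = k-th component of nabla_{d_i} d_j at x.\<close>

definition pd :: "(real^'n \<Rightarrow> real) \<Rightarrow> 'n \<Rightarrow> real^'n \<Rightarrow> real" where
  "pd f i x = frechet_derivative f (at x) (axis i 1)"

coinductive smooth_fun_on :: "(real^'n) set \<Rightarrow> (real^'n \<Rightarrow> real) \<Rightarrow> bool" where
  "f differentiable_on U \<Longrightarrow> (\<forall>i. smooth_fun_on U (pd f i)) \<Longrightarrow> smooth_fun_on U f"

definition metric_matrix :: "(real^'n \<Rightarrow> 'n \<Rightarrow> 'n \<Rightarrow> real) \<Rightarrow> real^'n \<Rightarrow> real^'n^'n" where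
  "metric_matrix g x = (\<chi> i j. g x i j)"

definition inv_metric :: "(real^'n \<Rightarrow> 'n \<Rightarrow> 'n \<Rightarrow> real) \<Rightarrow> real^'n \<Rightarrow> real^'n^'n" where
  "inv_metric g x = matrix_inv (metric_matrix g x)"

definition pseudo_riemannian_on ::
  "(real^'n) set \<Rightarrow> (real^'n \<Rightarrow> 'n \<Rightarrow> 'n \<Rightarrow> real) \<Rightarrow> bool" where
  "pseudo_riemannian_on U g \<longleftrightarrow>
     (\<forall>i j. smooth_fun_on U (\<lambda>x. g x i j)) \<and>
     (\<forall>x\<in>U. \<forall>i j. g x i j = g x j i) \<and>
     (\<forall>x\<in>U. invertible (metric_matrix g x))"

definition connection_on ::
  "(real^'n) set \<Rightarrow> (real^'n \<Rightarrow> 'n \<Rightarrow> 'n \<Rightarrow> 'n \<Rightarrow> real) \<Rightarrow> bool" where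
  "connection_on U G \<longleftrightarrow> (\<forall>i j k. smooth_fun_on U (\<lambda>x. G x i j k))"

definition torsion_free_on ::
  "(real^'n) set \<Rightarrow> (real^'n \<Rightarrow> 'n \<Rightarrow> 'n \<Rightarrow> 'n \<Rightarrow> real) \<Rightarrow> bool" where
  "torsion_free_on U G \<longleftrightarrow> (\<forall>x\<in>U. \<forall>i j k. G x i j k = G x j i k)"

text \<open>Conjugacy u g(v,w) = g(nabla_u v,w) + g(v, nabla*_u w) on coordinate fields.\<close>
definition conjugate_on ::
  "(real^'n) set \<Rightarrow> (real^'n \<Rightarrow> 'n \<Rightarrow> 'n \<Rightarrow> 'n \<Rightarrow> real) \<Rightarrow>
   (real^'n \<Rightarrow> 'n \<Rightarrow> 'n \<Rightarrow> real) \<Rightarrow> (real^'n \<Rightarrow> 'n \<Rightarrow> 'n \<Rightarrow> 'n \<Rightarrow> real) \<Rightarrow> bool" where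
  "conjugate_on U G g Gs \<longleftrightarrow>
     (\<forall>x\<in>U. \<forall>i j k. pd (\<lambda>y. g y j k) i x =
        (\<Sum>l\<in>UNIV. G x i j l * g x l k) + (\<Sum>l\<in>UNIV. Gs x i k l * g x j l))"

text \<open>Curvature R(d_i,d_j)d_k = sum_m riemann G x i j k m d_m, with
  R(u,v) = nabla_u nabla_v - nabla_v nabla_u - nabla_[u,v].\<close>
definition riemann ::
  "(real^'n \<Rightarrow> 'n \<Rightarrow> 'n \<Rightarrow> 'n \<Rightarrow> real) \<Rightarrow> real^'n \<Rightarrow> 'n \<Rightarrow> 'n \<Rightarrow> 'n \<Rightarrow> 'n \<Rightarrow> real" where
  "riemann G x i j k m =
     pd (\<lambda>y. G y j k m) i x - pd (\<lambda>y. G y i k m) j x +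
     (\<Sum>l\<in>UNIV. G x j k l * G x i l m - G x i k l * G x j l m)"

text \<open>Ric(x,y) = Tr(z \<mapsto> R(z,x)y).\<close>
definition ricci ::
  "(real^'n \<Rightarrow> 'n \<Rightarrow> 'n \<Rightarrow> 'n \<Rightarrow> real) \<Rightarrow> real^'n \<Rightarrow> 'n \<Rightarrow> 'n \<Rightarrow> real" where
  "ricci G x j k = (\<Sum>i\<in>UNIV. riemann G x i j k i)"

definition ricci_symmetric_on ::
  "(real^'n) set \<Rightarrow> (real^'n \<Rightarrow> 'n \<Rightarrow> 'n \<Rightarrow> 'n \<Rightarrow> real) \<Rightarrow> bool" where
  "ricci_symmetric_on U G \<longleftrightarrow> (\<forall>x\<in>U. \<forall>j k. ricci G x j k = ricci G x k j)"

definition scalar_curv ::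
  "(real^'n \<Rightarrow> 'n \<Rightarrow> 'n \<Rightarrow> real) \<Rightarrow> (real^'n \<Rightarrow> 'n \<Rightarrow> 'n \<Rightarrow> 'n \<Rightarrow> real) \<Rightarrow> real^'n \<Rightarrow> real" where
  "scalar_curv g G x = (\<Sum>j\<in>UNIV. \<Sum>k\<in>UNIV. inv_metric g x $ j $ k * ricci G x j k)"

definition bform ::
  "(real^'n \<Rightarrow> 'n \<Rightarrow> 'n \<Rightarrow> real) \<Rightarrow> (real^'n \<Rightarrow> 'n \<Rightarrow> 'n \<Rightarrow> 'n \<Rightarrow> real) \<Rightarrow>
   (real^'n \<Rightarrow> 'n \<Rightarrow> 'n \<Rightarrow> 'n \<Rightarrow> real) \<Rightarrow> real^'n \<Rightarrow> 'n \<Rightarrow> 'n \<Rightarrow> real" where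
  "bform g G Gs x j k =
     (real CARD('n) - 1) * ricci G x j k + ricci Gs x j k - scalar_curv g G x * g x j k"

definition gauge_metric ::
  "(real^'n \<Rightarrow> real) \<Rightarrow> (real^'n \<Rightarrow> 'n \<Rightarrow> 'n \<Rightarrow> real) \<Rightarrow> real^'n \<Rightarrow> 'n \<Rightarrow> 'n \<Rightarrow> real" where
  "gauge_metric q g x i j = q x * g x i j"

definition gauge_dual ::
  "(real^'n \<Rightarrow> real) \<Rightarrow> (real^'n \<Rightarrow> 'n \<Rightarrow> 'n \<Rightarrow> 'n \<Rightarrow> real) \<Rightarrow> real^'n \<Rightarrow> 'n \<Rightarrow> 'n \<Rightarrow> 'n \<Rightarrow> real" where
  "gauge_dual q Gs x i j k =
     Gs x i j k + pd (\<lambda>y. ln (q y)) i x * (if k = j then 1 else 0)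
                + pd (\<lambda>y. ln (q y)) j x * (if k = i then 1 else 0)"

end

theory Submission
  imports Defs
begin


lemma pd_at: "(f has_derivative f') (at x) \<Longrightarrow> pd f i x = f' (axis i 1)"
  unfolding pd_def by (drule frechet_derivative_at) simp

lemma pd_works: "f differentiable at x \<Longrightarrow> (f has_derivative frechet_derivative f (at x)) (at x)"
  by (simp add: frechet_derivative_works[symmetric])

lemma smooth_diff: "smooth_fun_on U f \<Longrightarrow> open U \<Longrightarrow> x \<in> U \<Longrightarrow> f differentiable at x"
  by (erule smooth_fun_on.cases) (simp add: differentiable_on_eq_differentiable_at)

lemma smooth_pd: "smooth_fun_on U f \<Longrightarrow> smooth_fun_on U (pd f i)"
  by (erule smooth_fun_on.cases) simp


lemma pd_mult:
  assumes "f differentiable at x" "g differentiable at x"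
  shows "pd (\<lambda>y. f y * g y) i x = f x * pd g i x + pd f i x * g x"
  using pd_at[OF has_derivative_mult[OF pd_works[OF assms(1)] pd_works[OF assms(2)]], where i=i]
  by (simp add: pd_def)

lemma pd_add:
  assumes "f differentiable at x" "g differentiable at x"
  shows "pd (\<lambda>y. f y + g y) i x = pd f i x + pd g i x"
  using pd_at[OF has_derivative_add[OF pd_works[OF assms(1)] pd_works[OF assms(2)]], where i=i]
  by (simp add: pd_def)

lemma pd_diff:
  assumes "f differentiable at x" "g differentiable at x"
  shows "pd (\<lambda>y. f y - g y) i x = pd f i x - pd g i x"
  using pd_at[OF has_derivative_diff[OF pd_works[OF assms(1)] pd_works[OF assms(2)]], where i=i]
  by (simp add: pd_def)

lemma pd_multc:
  assumes "f differentiable at x"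
  shows "pd (\<lambda>y. f y * c) i x = pd f i x * c"
  using pd_at[OF has_derivative_mult_left[OF pd_works[OF assms(1)]], where i=i]
  by (simp add: pd_def)

lemma pd_sum:
  assumes "\<And>l. f l differentiable at x"
  shows "pd (\<lambda>y. \<Sum>l\<in>(UNIV::'m::finite set). f l y) i x = (\<Sum>l\<in>UNIV. pd (f l) i x)"
proof -
  have "((\<lambda>y. \<Sum>l\<in>(UNIV::'m set). f l y) has_derivative (\<lambda>h. \<Sum>l\<in>UNIV. frechet_derivative (f l) (at x) h)) (at x)"
    by (rule has_derivative_sum) (use pd_works[OF assms] in auto)
  from pd_at[OF this, where i=i] show ?thesis by (simp add: pd_def)
qed

lemma pd_cong:
  assumes "open U" "x \<in> U" "\<And>y. y \<in> U \<Longrightarrow> f y = g y" "f differentiable at x"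
  shows "pd f i x = pd g i x" "g differentiable at x"
proof -
  have d: "(g has_derivative frechet_derivative f (at x)) (at x)"
    by (rule has_derivative_transform_within_open[OF pd_works[OF assms(4)] assms(1,2)]) (use assms(3) in auto)
  from pd_at[OF d, where i=i] show "pd f i x = pd g i x" by (simp add: pd_def)
  from d show "g differentiable at x" unfolding differentiable_def by blast
qed

lemma pd_ln:
  fixes q :: "real^'n \<Rightarrow> real"
  assumes "q differentiable at y" "q y > 0"
  shows "pd (\<lambda>z. ln (q z)) i y = pd q i y / q y" "(\<lambda>z. ln (q z)) differentiable at y"
proof -
  have l: "(ln has_derivative (\<lambda>h. inverse (q y) * h)) (at (q y))"
    using DERIV_ln[OF assms(2)] unfolding has_field_derivative_def by simp
  have d: "((\<lambda>z. ln (q z)) has_derivative (\<lambda>h. inverse (q y) * frechet_derivative q (at y) h)) (at y)"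
    by (rule has_derivative_compose[OF pd_works[OF assms(1)] l])
  from pd_at[OF d, where i=i] show "pd (\<lambda>z. ln (q z)) i y = pd q i y / q y" by (simp add: pd_def divide_inverse mult.commute)
  from d show "(\<lambda>z. ln (q z)) differentiable at y" unfolding differentiable_def by blast
qed

lemma line_deriv:
  fixes f :: "real^'n \<Rightarrow> real"
  assumes "f differentiable at (c + s *\<^sub>R v)"
  shows "((\<lambda>s. f (c + s *\<^sub>R v)) has_real_derivative (frechet_derivative f (at (c + s *\<^sub>R v)) v)) (at s)"
proof -
  have l: "((\<lambda>s. c + s *\<^sub>R v) has_derivative (\<lambda>h. h *\<^sub>R v)) (at s)"
    by (auto intro!: derivative_eq_intros)
  have "((\<lambda>s. f (c + s *\<^sub>R v)) has_derivative (\<lambda>h. frechet_derivative f (at (c + s *\<^sub>R v)) (h *\<^sub>R v))) (at s)"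
    by (rule has_derivative_compose[OF l pd_works[OF assms]])
  moreover have "linear (frechet_derivative f (at (c + s *\<^sub>R v)))"
    using pd_works[OF assms] has_derivative_linear by blast
  ultimately have "((\<lambda>s. f (c + s *\<^sub>R v)) has_derivative (\<lambda>h. h * frechet_derivative f (at (c + s *\<^sub>R v)) v)) (at s)"
    by (simp add: linear_scale)
  thus ?thesis unfolding has_field_derivative_def
    by (rule has_derivative_eq_rhs) (auto simp: fun_eq_iff)
qed

lemma dist_xw: "dist x (x + w) = norm (w::'a::real_normed_vector)"
  by (simp add: dist_norm)

lemma schwarz_half:
  fixes f :: "real^'n \<Rightarrow> real"
  assumes U: "open U" "x \<in> U" and fd: "\<forall>y\<in>U. f differentiable at y"
    and D: "(pd f i has_derivative D) (at x)" and e: "e > 0"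
  shows "\<exists>d>0. \<forall>t. 0 < t \<and> t < d \<longrightarrow>
    \<bar>f (x + t *\<^sub>R axis j 1 + t *\<^sub>R axis i 1) - f (x + t *\<^sub>R axis i 1) - f (x + t *\<^sub>R axis j 1) + f x
      - t*t * D (axis j 1)\<bar> \<le> 3*e*t*t"
proof -
  obtain r where r: "r > 0" "ball x r \<subseteq> U" using U open_contains_ball by blast
  from D[unfolded has_derivative_at_alt] e obtain d1 where d1: "d1 > 0"
    "\<forall>y. norm (y - x) < d1 \<longrightarrow> norm (pd f i y - pd f i x - D (y - x)) \<le> e * norm (y - x)"
    and bl: "bounded_linear D" by blast
  have lin: "linear D" using bl bounded_linear.linear by blast
  let ?ei = "axis i (1::real)" and ?ej = "axis j (1::real)"
  show ?thesis
  proof (intro exI[of _ "min (r/2) (d1/2)"] conjI allI impI)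
    show "0 < min (r/2) (d1/2)" using r d1 by simp
    fix t :: real assume t: "0 < t \<and> t < min (r/2) (d1/2)"
    define u where "u s = f ((x + t *\<^sub>R ?ej) + s *\<^sub>R ?ei) - f (x + s *\<^sub>R ?ei)" for s
    define u' where "u' s = pd f i ((x + t *\<^sub>R ?ej) + s *\<^sub>R ?ei) - pd f i (x + s *\<^sub>R ?ei)" for s
    have inU: "(x + t *\<^sub>R ?ej) + s *\<^sub>R ?ei \<in> U" "x + s *\<^sub>R ?ei \<in> U" if "0 \<le> s" "s \<le> t" for s
    proof -
      have "norm (t *\<^sub>R ?ej + s *\<^sub>R ?ei) \<le> t + s"
        using norm_triangle_ineq[of "t *\<^sub>R ?ej" "s *\<^sub>R ?ei"] that t by simp
      hence "dist x ((x + t *\<^sub>R ?ej) + s *\<^sub>R ?ei) < r" using that t by (simp only: add.assoc dist_xw) linarith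
      thus "(x + t *\<^sub>R ?ej) + s *\<^sub>R ?ei \<in> U" using r by auto
      have "dist x (x + s *\<^sub>R ?ei) < r" using that t by (simp add: dist_norm)
      thus "x + s *\<^sub>R ?ei \<in> U" using r by auto
    qed
    have der: "DERIV u s :> u' s" if "0 \<le> s" "s \<le> t" for s
      unfolding u_def u'_def pd_def
      by (intro DERIV_diff line_deriv) (use fd inU[OF that] in auto)
    obtain z where z: "0 < z" "z < t" "u t - u 0 = (t - 0) * u' z"
      using MVT2[of 0 t u u'] der t by auto
    define p1 where "p1 = (x + t *\<^sub>R ?ej) + z *\<^sub>R ?ei"
    define p2 where "p2 = x + z *\<^sub>R ?ei"
    have n1: "norm (p1 - x) \<le> 2 * t"
    proof -
      have "norm (p1 - x) \<le> t + z"
        using norm_triangle_ineq[of "t *\<^sub>R ?ej" "z *\<^sub>R ?ei"] t z by (simp add: p1_def)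
      thus ?thesis using z by simp
    qed
    have n2: "norm (p2 - x) \<le> t" using z by (simp add: p2_def)
    have b1: "norm (pd f i p1 - pd f i x - D (p1 - x)) \<le> e * norm (p1 - x)"
      using d1(2) n1 t by auto
    have b2: "norm (pd f i p2 - pd f i x - D (p2 - x)) \<le> e * norm (p2 - x)"
      using d1(2) n2 t z by auto
    have "D (p1 - x) - D (p2 - x) = t * D ?ej"
      using lin by (simp add: p1_def p2_def linear_add linear_scale)
    hence eq: "u' z - t * D ?ej = (pd f i p1 - pd f i x - D (p1 - x)) - (pd f i p2 - pd f i x - D (p2 - x))"
      by (simp add: u'_def p1_def p2_def)
    have "\<bar>u' z - t * D ?ej\<bar> \<le> e * norm (p1 - x) + e * norm (p2 - x)"
      unfolding eq using b1 b2 by (simp add: abs_diff_le_iff) linarith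
    also have "\<dots> \<le> e * (2 * t) + e * t"
      using n1 n2 e by (intro add_mono mult_left_mono) auto
    also have "\<dots> = 3 * e * t" by simp
    finally have bd: "\<bar>u' z - t * D ?ej\<bar> \<le> 3 * e * t" .
    have "u t - u 0 - t*t * D ?ej = t * (u' z - t * D ?ej)" using z by (simp add: algebra_simps)
    hence "\<bar>u t - u 0 - t*t * D ?ej\<bar> = t * \<bar>u' z - t * D ?ej\<bar>" using t by (simp add: abs_mult)
    also have "\<dots> \<le> t * (3 * e * t)" using bd t by (simp add: mult_left_mono)
    finally show "\<bar>f (x + t *\<^sub>R ?ej + t *\<^sub>R ?ei) - f (x + t *\<^sub>R ?ei) - f (x + t *\<^sub>R ?ej) + f x
      - t*t * D ?ej\<bar> \<le> 3*e*t*t" by (simp add: u_def algebra_simps)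
  qed
qed

lemma schwarz:
  fixes f :: "real^'n \<Rightarrow> real"
  assumes U: "open U" "x \<in> U" and fd: "\<forall>y\<in>U. f differentiable at y"
    and di: "pd f i differentiable at x" and dj: "pd f j differentiable at x"
  shows "pd (pd f i) j x = pd (pd f j) i x"
proof -
  define Di where "Di = frechet_derivative (pd f i) (at x)"
  define Dj where "Dj = frechet_derivative (pd f j) (at x)"
  have Di: "(pd f i has_derivative Di) (at x)" using pd_works[OF di] Di_def by simp
  have Dj: "(pd f j has_derivative Dj) (at x)" using pd_works[OF dj] Dj_def by simp
  have c1: "pd (pd f i) j x = Di (axis j 1)" using pd_at[OF Di] .
  have c2: "pd (pd f j) i x = Dj (axis i 1)" using pd_at[OF Dj] .
  have key: "\<bar>Di (axis j 1) - Dj (axis i 1)\<bar> \<le> 6 * e" if e: "e > 0" for e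
  proof -
    obtain d1 where d1: "d1 > 0" "\<forall>t. 0 < t \<and> t < d1 \<longrightarrow>
      \<bar>f (x + t *\<^sub>R axis j 1 + t *\<^sub>R axis i 1) - f (x + t *\<^sub>R axis i 1) - f (x + t *\<^sub>R axis j 1) + f x
      - t*t * Di (axis j 1)\<bar> \<le> 3*e*t*t"
      using schwarz_half[OF U fd Di e, of j] by blast
    obtain d2 where d2: "d2 > 0" "\<forall>t. 0 < t \<and> t < d2 \<longrightarrow>
      \<bar>f (x + t *\<^sub>R axis i 1 + t *\<^sub>R axis j 1) - f (x + t *\<^sub>R axis j 1) - f (x + t *\<^sub>R axis i 1) + f x
      - t*t * Dj (axis i 1)\<bar> \<le> 3*e*t*t"
      using schwarz_half[OF U fd Dj e, of i] by blast
    define t where "t = min d1 d2 / 2"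
    have t: "0 < t" "t < d1" "t < d2" using d1 d2 by (auto simp: t_def)
    have comm: "x + t *\<^sub>R axis i 1 + t *\<^sub>R axis j 1 = x + t *\<^sub>R axis j 1 + t *\<^sub>R axis i 1"
      by (simp add: algebra_simps)
    have "\<bar>t*t * Di (axis j 1) - t*t * Dj (axis i 1)\<bar> \<le> 6*e*t*t"
      using d1(2)[rule_format, of t] d2(2)[rule_format, of t] t unfolding comm by linarith
    hence "t*t * \<bar>Di (axis j 1) - Dj (axis i 1)\<bar> \<le> t*t * (6*e)"
      by (simp add: abs_mult right_diff_distrib[symmetric] mult_ac)
    thus ?thesis using t by (simp add: mult_le_cancel_left_pos)
  qed
  have "Di (axis j 1) = Dj (axis i 1)"
  proof (rule ccontr)
    assume ne: "Di (axis j 1) \<noteq> Dj (axis i 1)"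
    hence "\<bar>Di (axis j 1) - Dj (axis i 1)\<bar> > 0" by simp
    from key[of "\<bar>Di (axis j 1) - Dj (axis i 1)\<bar> / 12"] this show False by simp
  qed
  thus ?thesis using c1 c2 by simp
qed




lemma mult_if1: "c * (if P then a else 0) = (if P then c * a else (0::real))" by simp
lemma mult_if2: "(if P then a else 0) * c = (if P then a * c else (0::real))" by simp

lemma sum_if_const: "(\<Sum>l\<in>S. if P then F l else 0) = (if P then (\<Sum>l\<in>S. F l) else (0::real))" by simp

lemmas dsimps = sum_if_const distrib_left distrib_right sum.distrib sum_subtractf mult_if1 mult_if2 left_diff_distrib right_diff_distrib

definition "Ad f i j k = f i * (if k = j then 1 else 0) + f j * (if k = i then (1::real) else 0)"

context fixes f :: "'n::finite \<Rightarrow> real" and Gs :: "'n \<Rightarrow> 'n \<Rightarrow> 'n \<Rightarrow> real" and j k :: 'n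
begin
lemma X1: "(\<Sum>i\<in>UNIV. \<Sum>l\<in>UNIV. Gs j k l * Ad f i l i) = (real CARD('n) + 1) * (\<Sum>l\<in>UNIV. Gs j k l * f l)"
  unfolding Ad_def by (simp add: dsimps sum_distrib_left[symmetric] cong: if_cong)
lemma X2: "(\<Sum>i\<in>UNIV. \<Sum>l\<in>UNIV. Ad f j k l * Gs i l i) = (\<Sum>i\<in>UNIV. f j * Gs i k i + f k * Gs i j i)"
  unfolding Ad_def by (simp add: dsimps cong: if_cong)
lemma X3: "(\<Sum>i\<in>UNIV. \<Sum>l\<in>UNIV. Ad f j k l * Ad f i l i) = 2 * (real CARD('n) + 1) * f j * f k"
  unfolding Ad_def by (simp add: dsimps cong: if_cong)
lemma X4: "(\<Sum>i\<in>UNIV. \<Sum>l\<in>UNIV. Gs i k l * Ad f j l i) = (\<Sum>i\<in>UNIV. Gs i k i * f j + Gs j k i * f i)"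
  unfolding Ad_def by (simp add: dsimps cong: if_cong)
lemma X5: "(\<Sum>i\<in>UNIV. \<Sum>l\<in>UNIV. Ad f i k l * Gs j l i) = (\<Sum>i\<in>UNIV. f i * Gs j k i + f k * Gs j i i)"
  unfolding Ad_def by (simp add: dsimps cong: if_cong)
lemma X6: "(\<Sum>i\<in>UNIV. \<Sum>l\<in>UNIV. Ad f i k l * Ad f j l i) = (real CARD('n) + 3) * f j * f k"
  unfolding Ad_def by (simp add: dsimps cong: if_cong)
lemma Xd: "(\<Sum>i\<in>UNIV. Ad (df i) j k i - Ad (df j) i k i) = df k j - real CARD('n) * df j k"
  unfolding Ad_def by (simp add: dsimps cong: if_cong)
end

definition ric :: "('n::finite \<Rightarrow> 'n \<Rightarrow> 'n \<Rightarrow> real) \<Rightarrow> ('n \<Rightarrow> 'n \<Rightarrow> 'n \<Rightarrow> 'n \<Rightarrow> real) \<Rightarrow> 'n \<Rightarrow> 'n \<Rightarrow> real" where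
  "ric G dG j k = (\<Sum>i\<in>UNIV. dG i j k i - dG j i k i + (\<Sum>l\<in>UNIV. G j k l * G i l i - G i k l * G j l i))"

lemma ric_add:
  "ric (\<lambda>i j k. G i j k + A i j k) (\<lambda>a i j k. dG a i j k + dA a i j k) j k =
   ric G dG j k + (\<Sum>i\<in>UNIV. dA i j k i - dA j i k i) +
   ((\<Sum>i\<in>UNIV. \<Sum>l\<in>UNIV. G j k l * A i l i) + (\<Sum>i\<in>UNIV. \<Sum>l\<in>UNIV. A j k l * G i l i)
   + (\<Sum>i\<in>UNIV. \<Sum>l\<in>UNIV. A j k l * A i l i) - (\<Sum>i\<in>UNIV. \<Sum>l\<in>UNIV. G i k l * A j l i)
   - (\<Sum>i\<in>UNIV. \<Sum>l\<in>UNIV. A i k l * G j l i) - (\<Sum>i\<in>UNIV. \<Sum>l\<in>UNIV. A i k l * A j l i))"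
proof -
  have "ric (\<lambda>i j k. G i j k + A i j k) (\<lambda>a i j k. dG a i j k + dA a i j k) j k =
    (\<Sum>i\<in>UNIV. (dG i j k i - dG j i k i + (\<Sum>l\<in>UNIV. G j k l * G i l i - G i k l * G j l i))
     + (dA i j k i - dA j i k i) + (\<Sum>l\<in>UNIV. G j k l * A i l i + A j k l * G i l i + A j k l * A i l i
        - G i k l * A j l i - A i k l * G j l i - A i k l * A j l i))"
    unfolding ric_def
    by (rule sum.cong) (auto simp: sum.distrib[symmetric] algebra_simps intro!: sum.cong)
  thus ?thesis unfolding ric_def by (simp add: sum.distrib sum_subtractf)
qed

lemma ric_star:
  fixes Gs :: "'n::finite \<Rightarrow> 'n \<Rightarrow> 'n \<Rightarrow> real"
  assumes tf: "\<And>i j k. Gs i j k = Gs j i k" and dfs: "\<And>a b. df a b = df b a"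
  shows "ric (\<lambda>i j k. Gs i j k + Ad f i j k) (\<lambda>a i j k. dGs a i j k + Ad (df a) i j k) j k
       = ric Gs dGs j k - (real CARD('n) - 1) * (df j k - (\<Sum>l\<in>UNIV. Gs j k l * f l) - f j * f k)"
proof -
  have t: "(\<Sum>i\<in>UNIV. f j * Gs i k i + f k * Gs i j i) - (\<Sum>i\<in>UNIV. Gs i k i * f j + Gs j k i * f i)
     - (\<Sum>i\<in>UNIV. f i * Gs j k i + f k * Gs j i i) = - 2 * (\<Sum>l\<in>UNIV. Gs j k l * f l)"
    by (simp add: sum.distrib sum_subtractf tf[of _ j] algebra_simps sum_distrib_left[symmetric])
  have "ric (\<lambda>i j k. Gs i j k + Ad f i j k) (\<lambda>a i j k. dGs a i j k + Ad (df a) i j k) j k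
    = ric Gs dGs j k + (df k j - real CARD('n) * df j k) +
      ((real CARD('n) + 1) * (\<Sum>l\<in>UNIV. Gs j k l * f l) + (\<Sum>i\<in>UNIV. f j * Gs i k i + f k * Gs i j i)
       + 2 * (real CARD('n) + 1) * f j * f k - (\<Sum>i\<in>UNIV. Gs i k i * f j + Gs j k i * f i)
       - (\<Sum>i\<in>UNIV. f i * Gs j k i + f k * Gs j i i) - (real CARD('n) + 3) * f j * f k)"
    apply (simp only: ric_add)
    apply (simp only: X3 X6)
    apply (simp only: X1 X2 X4 X5 Xd)
    done
  thus ?thesis using t dfs[of k j] by (simp add: algebra_simps)
qed



declare mult_if1[simp] mult_if2[simp]

lemma contract:
  fixes g Gi :: "'n::finite \<Rightarrow> 'n \<Rightarrow> real"
  assumes inv: "\<And>i j. (\<Sum>k\<in>UNIV. g i k * Gi k j) = (if i = j then 1 else 0)"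
  shows "(\<Sum>i\<in>UNIV. g a i * (\<Sum>m\<in>UNIV. Gi i m * X m)) = X a"
proof -
  have "(\<Sum>i\<in>UNIV. g a i * (\<Sum>m\<in>UNIV. Gi i m * X m)) = (\<Sum>i\<in>UNIV. \<Sum>m\<in>UNIV. g a i * Gi i m * X m)"
    by (simp add: sum_distrib_left mult.assoc)
  also have "\<dots> = (\<Sum>m\<in>UNIV. \<Sum>i\<in>UNIV. g a i * Gi i m * X m)" by (rule sum.swap)
  also have "\<dots> = (\<Sum>m\<in>UNIV. (\<Sum>i\<in>UNIV. g a i * Gi i m) * X m)" by (simp add: sum_distrib_right)
  also have "\<dots> = X a" using inv by simp
  finally show ?thesis .
qed

lemma contract2:
  fixes g Gi :: "'n::finite \<Rightarrow> 'n \<Rightarrow> real"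
  assumes inv: "\<And>i j. (\<Sum>k\<in>UNIV. Gi i k * g k j) = (if i = j then 1 else 0)"
  and gs: "\<And>i j. g i j = g j i"
  shows "(\<Sum>k\<in>UNIV. Gi a k * (\<Sum>m\<in>UNIV. Z m * g m k)) = Z a"
proof -
  have "(\<Sum>k\<in>UNIV. Gi a k * (\<Sum>m\<in>UNIV. Z m * g m k)) = (\<Sum>k\<in>UNIV. \<Sum>m\<in>UNIV. Gi a k * g k m * Z m)"
    by (simp add: sum_distrib_left gs mult_ac)
  also have "\<dots> = (\<Sum>m\<in>UNIV. \<Sum>k\<in>UNIV. Gi a k * g k m * Z m)" by (rule sum.swap)
  also have "\<dots> = (\<Sum>m\<in>UNIV. (\<Sum>k\<in>UNIV. Gi a k * g k m) * Z m)" by (simp add: sum_distrib_right)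
  also have "\<dots> = Z a" using inv by simp
  finally show ?thesis .
qed

lemma sym_inv:
  fixes g Gi :: "'n::finite \<Rightarrow> 'n \<Rightarrow> real"
  assumes gs: "\<And>i j. g i j = g j i"
  and inv1: "\<And>i j. (\<Sum>k\<in>UNIV. g i k * Gi k j) = (if i = j then 1 else 0)"
  and inv2: "\<And>i j. (\<Sum>k\<in>UNIV. Gi i k * g k j) = (if i = j then 1 else 0)"
  shows "Gi a b = Gi b a"
proof -
  have "Gi a b = (\<Sum>c\<in>UNIV. (if a = c then 1 else 0) * Gi c b)" by simp
  also have "\<dots> = (\<Sum>c\<in>UNIV. (\<Sum>k\<in>UNIV. Gi k a * g k c) * Gi c b)"
    using inv1 by (simp add: gs mult.commute)
  also have "\<dots> = (\<Sum>c\<in>UNIV. \<Sum>k\<in>UNIV. Gi k a * g k c * Gi c b)"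
    by (simp add: sum_distrib_right)
  also have "\<dots> = (\<Sum>k\<in>UNIV. \<Sum>c\<in>UNIV. Gi k a * g k c * Gi c b)" by (rule sum.swap)
  also have "\<dots> = (\<Sum>k\<in>UNIV. Gi k a * (\<Sum>c\<in>UNIV. g k c * Gi c b))"
    by (simp add: sum_distrib_left mult.assoc)
  also have "\<dots> = Gi b a" using inv1 by simp
  finally show ?thesis .
qed

lemma ric_sharp:
  fixes g Gi :: "'n::finite \<Rightarrow> 'n \<Rightarrow> real" and dg G Gs :: "'n \<Rightarrow> 'n \<Rightarrow> 'n \<Rightarrow> real"
  assumes gs: "\<And>i j. g i j = g j i"
  and inv1: "\<And>i j. (\<Sum>k\<in>UNIV. g i k * Gi k j) = (if i = j then 1 else 0)"
  and C1: "\<And>a b c. dg a b c = (\<Sum>l\<in>UNIV. G a b l * g l c) + (\<Sum>l\<in>UNIV. Gs a c l * g b l)"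
  and tf: "\<And>i j k. G i j k = G j i k"
  and P_def: "\<And>m. P m = (\<Sum>k\<in>UNIV. Gi m k * f k)"
  and dP_def: "\<And>a m. dP a m = (\<Sum>k\<in>UNIV. Gi m k * (df a k - (\<Sum>l\<in>UNIV. P l * dg a l k)))"
  shows "ric (\<lambda>i j k. G i j k + (- g i j * P k)) (\<lambda>a i j k. dG a i j k + (- dg a i j * P k - g i j * dP a k)) j k
    = ric G dG j k + (df j k - (\<Sum>l\<in>UNIV. G j k l * f l) - f j * f k
        + (\<Sum>i\<in>UNIV. P i * (\<Sum>l\<in>UNIV. (G i k l - Gs i k l) * g j l)))
      + g j k * ((\<Sum>l\<in>UNIV. P l * f l) - (\<Sum>i\<in>UNIV. dP i i) - (\<Sum>l\<in>UNIV. P l * (\<Sum>i\<in>UNIV. G i l i)))"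
proof -
  have fP: "(\<Sum>i\<in>UNIV. g i l * P i) = f l" for l
    using contract[OF inv1, of l f] by (simp add: gs P_def)
  have gdP: "(\<Sum>i\<in>UNIV. g i k * dP j i) = df j k - (\<Sum>l\<in>UNIV. P l * dg j l k)"
    using contract[OF inv1, of k "\<lambda>m. df j m - (\<Sum>l\<in>UNIV. P l * dg j l m)"] by (simp add: gs dP_def)
  have Yd: "(\<Sum>i\<in>UNIV. (- dg i j k * P i - g j k * dP i i) - (- dg j i k * P i - g i k * dP j i))
     = df j k - (\<Sum>i\<in>UNIV. P i * (\<Sum>l\<in>UNIV. G i j l * g l k)) - (\<Sum>i\<in>UNIV. P i * (\<Sum>l\<in>UNIV. Gs i k l * g j l))
       - g j k * (\<Sum>i\<in>UNIV. dP i i)"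
  proof -
    have "(\<Sum>i\<in>UNIV. (- dg i j k * P i - g j k * dP i i) - (- dg j i k * P i - g i k * dP j i))
      = - (\<Sum>i\<in>UNIV. dg i j k * P i) - g j k * (\<Sum>i\<in>UNIV. dP i i) + (\<Sum>i\<in>UNIV. dg j i k * P i)
        + (\<Sum>i\<in>UNIV. g i k * dP j i)"
      by (simp add: sum.distrib sum_subtractf sum_negf sum_distrib_left)
    also have "\<dots> = df j k - (\<Sum>i\<in>UNIV. dg i j k * P i) - g j k * (\<Sum>i\<in>UNIV. dP i i)"
      unfolding gdP by (simp add: mult.commute)
    also have "(\<Sum>i\<in>UNIV. dg i j k * P i) = (\<Sum>i\<in>UNIV. P i * (\<Sum>l\<in>UNIV. G i j l * g l k)) + (\<Sum>i\<in>UNIV. P i * (\<Sum>l\<in>UNIV. Gs i k l * g j l))"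
      unfolding C1 by (simp add: sum.distrib algebra_simps)
    finally show ?thesis by simp
  qed
  have Y1: "(\<Sum>i\<in>UNIV. \<Sum>l\<in>UNIV. G j k l * (- g i l * P i)) = - (\<Sum>l\<in>UNIV. G j k l * f l)"
  proof -
    have "(\<Sum>i\<in>UNIV. \<Sum>l\<in>UNIV. G j k l * (- g i l * P i)) = (\<Sum>l\<in>UNIV. \<Sum>i\<in>UNIV. G j k l * (- g i l * P i))"
      by (rule sum.swap)
    also have "\<dots> = (\<Sum>l\<in>UNIV. - (G j k l * (\<Sum>i\<in>UNIV. g i l * P i)))"
      by (simp add: sum_distrib_left sum_negf)
    finally show ?thesis by (simp add: fP sum_negf)
  qed
  have Y2: "(\<Sum>i\<in>UNIV. \<Sum>l\<in>UNIV. (- g j k * P l) * G i l i) = - g j k * (\<Sum>l\<in>UNIV. P l * (\<Sum>i\<in>UNIV. G i l i))"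
  proof -
    have "(\<Sum>i\<in>UNIV. \<Sum>l\<in>UNIV. (- g j k * P l) * G i l i) = (\<Sum>l\<in>UNIV. \<Sum>i\<in>UNIV. (- g j k * P l) * G i l i)"
      by (rule sum.swap)
    thus ?thesis by (simp add: sum_distrib_left mult.assoc)
  qed
  have Y3: "(\<Sum>i\<in>UNIV. \<Sum>l\<in>UNIV. (- g j k * P l) * (- g i l * P i)) = g j k * (\<Sum>l\<in>UNIV. P l * f l)"
  proof -
    have "(\<Sum>i\<in>UNIV. \<Sum>l\<in>UNIV. (- g j k * P l) * (- g i l * P i)) = (\<Sum>l\<in>UNIV. \<Sum>i\<in>UNIV. (- g j k * P l) * (- g i l * P i))"
      by (rule sum.swap)
    also have "\<dots> = (\<Sum>l\<in>UNIV. g j k * P l * (\<Sum>i\<in>UNIV. g i l * P i))"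
      by (rule sum.cong) (simp_all add: sum_distrib_left mult_ac)
    also have "\<dots> = (\<Sum>l\<in>UNIV. g j k * P l * f l)" by (simp only: fP)
    finally show ?thesis by (simp add: sum_distrib_left mult_ac)
  qed
  have Y4: "(\<Sum>i\<in>UNIV. \<Sum>l\<in>UNIV. G i k l * (- g j l * P i)) = - (\<Sum>i\<in>UNIV. P i * (\<Sum>l\<in>UNIV. G i k l * g j l))"
    by (simp add: sum_distrib_left sum_negf mult_ac)
  have Y5: "(\<Sum>i\<in>UNIV. \<Sum>l\<in>UNIV. (- g i k * P l) * G j l i) = - (\<Sum>i\<in>UNIV. P i * (\<Sum>l\<in>UNIV. G i j l * g l k))"
  proof -
    have "(\<Sum>i\<in>UNIV. \<Sum>l\<in>UNIV. (- g i k * P l) * G j l i) = (\<Sum>l\<in>UNIV. \<Sum>i\<in>UNIV. (- g i k * P l) * G j l i)"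
      by (rule sum.swap)
    also have "\<dots> = (\<Sum>l\<in>UNIV. \<Sum>i\<in>UNIV. - (P l * (G l j i * g i k)))"
      by (simp add: tf[of j] mult_ac)
    finally show ?thesis by (simp add: sum_distrib_left sum_negf)
  qed
  have Y6: "(\<Sum>i\<in>UNIV. \<Sum>l\<in>UNIV. (- g i k * P l) * (- g j l * P i)) = f k * f j"
  proof -
    have "(\<Sum>i\<in>UNIV. \<Sum>l\<in>UNIV. (- g i k * P l) * (- g j l * P i)) = (\<Sum>i\<in>UNIV. g i k * P i * (\<Sum>l\<in>UNIV. g l j * P l))"
      by (simp add: sum_distrib_left mult_ac gs[of j])
    also have "\<dots> = (\<Sum>i\<in>UNIV. g i k * P i * f j)" by (simp only: fP)
    also have "\<dots> = (\<Sum>i\<in>UNIV. g i k * P i) * f j" by (simp only: sum_distrib_right)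
    finally show ?thesis by (simp only: fP)
  qed
  show ?thesis
    apply (simp only: ric_add)
    apply (simp only: Yd Y1 Y2 Y3 Y4 Y5 Y6)
    apply (simp add: algebra_simps sum_subtractf sum.distrib)
    done
qed


lemma main_alg:
  fixes g Gi df :: "'n::finite \<Rightarrow> 'n \<Rightarrow> real" and dg G Gs :: "'n \<Rightarrow> 'n \<Rightarrow> 'n \<Rightarrow> real"
  assumes gs: "\<And>i j. g i j = g j i"
  and inv1: "\<And>i j. (\<Sum>k\<in>UNIV. g i k * Gi k j) = (if i = j then 1 else 0)"
  and inv2: "\<And>i j. (\<Sum>k\<in>UNIV. Gi i k * g k j) = (if i = j then 1 else 0)"
  and dgs: "\<And>a i j. dg a i j = dg a j i"
  and C1: "\<And>a b c. dg a b c = (\<Sum>l\<in>UNIV. G a b l * g l c) + (\<Sum>l\<in>UNIV. Gs a c l * g b l)"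
  and tf: "\<And>i j k. G i j k = G j i k"
  and tfs: "\<And>i j k. Gs i j k = Gs j i k"
  and dfs: "\<And>a b. df a b = df b a"
  and P_def: "\<And>m. P m = (\<Sum>k\<in>UNIV. Gi m k * f k)"
  and dP_def: "\<And>a m. dP a m = (\<Sum>k\<in>UNIV. Gi m k * (df a k - (\<Sum>l\<in>UNIV. P l * dg a l k)))"
  and H_def: "H = (\<lambda>i j k. G i j k + (- g i j * P k))"
  and dH_def: "dH = (\<lambda>a i j k. dG a i j k + (- dg a i j * P k - g i j * dP a k))"
  and Hs_def: "Hs = (\<lambda>i j k. Gs i j k + Ad f i j k)"
  and dHs_def: "dHs = (\<lambda>a i j k. dGs a i j k + Ad (df a) i j k)"
  shows "(real CARD('n) - 1) * ric H dH j k + ric Hs dHs j k - (\<Sum>a\<in>UNIV. \<Sum>b\<in>UNIV. Gi a b * ric H dH a b) * g j k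
       = (real CARD('n) - 1) * ric G dG j k + ric Gs dGs j k - (\<Sum>a\<in>UNIV. \<Sum>b\<in>UNIV. Gi a b * ric G dG a b) * g j k"
proof -
  define n where "n = real CARD('n)"
  define K where "K j k = (\<Sum>i\<in>UNIV. P i * (\<Sum>l\<in>UNIV. (G i k l - Gs i k l) * g j l))" for j k
  define E where "E j k = df j k - (\<Sum>l\<in>UNIV. G j k l * f l) - f j * f k + K j k" for j k
  define s where "s = (\<Sum>l\<in>UNIV. P l * f l) - (\<Sum>i\<in>UNIV. dP i i) - (\<Sum>l\<in>UNIV. P l * (\<Sum>i\<in>UNIV. G i l i))"
  have RH: "ric H dH a b = ric G dG a b + E a b + g a b * s" for a b
    unfolding H_def dH_def E_def K_def s_def
    by (rule ric_sharp[OF gs inv1 C1 tf P_def dP_def])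
  have RS: "ric Hs dHs j k = ric Gs dGs j k - (n - 1) * (df j k - (\<Sum>l\<in>UNIV. Gs j k l * f l) - f j * f k)"
    unfolding Hs_def dHs_def n_def by (rule ric_star[OF tfs dfs])
  have Gis: "Gi a b = Gi b a" for a b using sym_inv[OF gs inv1 inv2] .
  have fP: "(\<Sum>m\<in>UNIV. P m * g m l) = f l" for l
    using contract[OF inv1, of l f] by (simp add: gs P_def mult.commute)
  define Cf where "Cf a b c = (\<Sum>l\<in>UNIV. (G a b l - Gs a b l) * g l c)" for a b c
  have Cbc: "Cf a b c = Cf a c b" for a b c
  proof -
    have "dg a b c = dg a c b" by (rule dgs)
    hence "(\<Sum>l\<in>UNIV. G a b l * g l c) + (\<Sum>l\<in>UNIV. Gs a c l * g l b) = (\<Sum>l\<in>UNIV. G a c l * g l b) + (\<Sum>l\<in>UNIV. Gs a b l * g l c)"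
      unfolding C1 by (simp add: gs[of b] gs[of c])
    thus ?thesis unfolding Cf_def by (simp add: left_diff_distrib sum_subtractf)
  qed
  have Cab: "Cf a b c = Cf b a c" for a b c unfolding Cf_def by (simp add: tf[of a] tfs[of a])
  have Csym: "Cf i b a = Cf a b i" for i a b
    by (metis Cab Cbc)
  have Q: "(\<Sum>l\<in>UNIV. Gs j k l * f l) - (\<Sum>l\<in>UNIV. G j k l * f l) + K j k = 0" for j k
  proof -
    have "(\<Sum>l\<in>UNIV. G j k l * f l) - (\<Sum>l\<in>UNIV. Gs j k l * f l) = (\<Sum>l\<in>UNIV. (G j k l - Gs j k l) * (\<Sum>m\<in>UNIV. P m * g m l))"
      by (simp add: fP left_diff_distrib sum_subtractf)
    also have "\<dots> = (\<Sum>l\<in>UNIV. \<Sum>m\<in>UNIV. P m * ((G j k l - Gs j k l) * g l m))"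
      by (simp add: sum_distrib_left gs mult_ac)
    also have "\<dots> = (\<Sum>m\<in>UNIV. \<Sum>l\<in>UNIV. P m * ((G j k l - Gs j k l) * g l m))" by (rule sum.swap)
    also have "\<dots> = (\<Sum>m\<in>UNIV. P m * Cf j k m)" by (simp add: Cf_def sum_distrib_left)
    also have "\<dots> = K j k" unfolding K_def
    proof (rule sum.cong[OF refl])
      fix m
      have "Cf j k m = Cf m k j" by (rule Csym)
      also have "\<dots> = (\<Sum>l\<in>UNIV. (G m k l - Gs m k l) * g j l)"
        unfolding Cf_def by (rule sum.cong[OF refl]) (metis gs)
      finally show "P m * Cf j k m = P m * (\<Sum>l\<in>UNIV. (G m k l - Gs m k l) * g j l)" by simp
    qed
    finally show ?thesis by simp
  qed
  have E2: "E a b = df a b - (\<Sum>l\<in>UNIV. Gs a b l * f l) - f a * f b" for a b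
    using Q[of a b] unfolding E_def by simp
  have T1: "(\<Sum>a\<in>UNIV. \<Sum>b\<in>UNIV. Gi a b * (f a * f b)) = (\<Sum>l\<in>UNIV. P l * f l)"
  proof -
    have "(\<Sum>a\<in>UNIV. \<Sum>b\<in>UNIV. Gi a b * (f a * f b)) = (\<Sum>b\<in>UNIV. \<Sum>a\<in>UNIV. Gi a b * (f a * f b))"
      by (rule sum.swap)
    also have "\<dots> = (\<Sum>b\<in>UNIV. P b * f b)"
    proof (rule sum.cong[OF refl])
      fix b
      have "(\<Sum>a\<in>UNIV. Gi a b * (f a * f b)) = (\<Sum>a\<in>UNIV. f b * (Gi b a * f a))"
      proof (rule sum.cong[OF refl])
        fix a
        show "Gi a b * (f a * f b) = f b * (Gi b a * f a)" by (simp only: Gis[of a b] mult_ac)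
      qed
      thus "(\<Sum>a\<in>UNIV. Gi a b * (f a * f b)) = P b * f b" by (simp add: P_def sum_distrib_left mult.commute)
    qed
    finally show ?thesis .
  qed
  have U: "(\<Sum>k\<in>UNIV. Gi i k * (\<Sum>l\<in>UNIV. P l * dg i l k)) = (\<Sum>l\<in>UNIV. P l * G i l i) + (\<Sum>k\<in>UNIV. Gi i k * (\<Sum>m\<in>UNIV. Gs i k m * f m))" for i
  proof -
    have a: "(\<Sum>l\<in>UNIV. P l * (\<Sum>m\<in>UNIV. G i l m * g m k)) = (\<Sum>m\<in>UNIV. (\<Sum>l\<in>UNIV. P l * G i l m) * g m k)" for k
    proof -
      have "(\<Sum>l\<in>UNIV. P l * (\<Sum>m\<in>UNIV. G i l m * g m k)) = (\<Sum>l\<in>UNIV. \<Sum>m\<in>UNIV. P l * G i l m * g m k)"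
        by (simp add: sum_distrib_left mult_ac)
      also have "\<dots> = (\<Sum>m\<in>UNIV. \<Sum>l\<in>UNIV. P l * G i l m * g m k)" by (rule sum.swap)
      finally show ?thesis by (simp add: sum_distrib_right)
    qed
    have b: "(\<Sum>l\<in>UNIV. P l * (\<Sum>m\<in>UNIV. Gs i k m * g l m)) = (\<Sum>m\<in>UNIV. Gs i k m * f m)" for k
    proof -
      have "(\<Sum>l\<in>UNIV. P l * (\<Sum>m\<in>UNIV. Gs i k m * g l m)) = (\<Sum>l\<in>UNIV. \<Sum>m\<in>UNIV. Gs i k m * (P l * g l m))"
        by (simp add: sum_distrib_left mult_ac)
      also have "\<dots> = (\<Sum>m\<in>UNIV. \<Sum>l\<in>UNIV. Gs i k m * (P l * g l m))" by (rule sum.swap)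
      also have "\<dots> = (\<Sum>m\<in>UNIV. Gs i k m * (\<Sum>l\<in>UNIV. P l * g l m))" by (simp add: sum_distrib_left)
      finally show ?thesis by (simp only: fP)
    qed
    have "(\<Sum>k\<in>UNIV. Gi i k * (\<Sum>l\<in>UNIV. P l * dg i l k)) =
      (\<Sum>k\<in>UNIV. Gi i k * (\<Sum>l\<in>UNIV. P l * (\<Sum>m\<in>UNIV. G i l m * g m k)) + Gi i k * (\<Sum>l\<in>UNIV. P l * (\<Sum>m\<in>UNIV. Gs i k m * g l m)))"
      unfolding C1 by (simp add: distrib_left sum.distrib)
    also have "\<dots> = (\<Sum>k\<in>UNIV. Gi i k * (\<Sum>m\<in>UNIV. (\<Sum>l\<in>UNIV. P l * G i l m) * g m k)) + (\<Sum>k\<in>UNIV. Gi i k * (\<Sum>m\<in>UNIV. Gs i k m * f m))"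
      by (simp only: a b sum.distrib)
    also have "\<dots> = (\<Sum>l\<in>UNIV. P l * G i l i) + (\<Sum>k\<in>UNIV. Gi i k * (\<Sum>m\<in>UNIV. Gs i k m * f m))"
      by (simp only: contract2[OF inv2 gs])
    finally show ?thesis .
  qed
  have T3: "(\<Sum>i\<in>UNIV. dP i i) = (\<Sum>a\<in>UNIV. \<Sum>b\<in>UNIV. Gi a b * df a b) - (\<Sum>l\<in>UNIV. P l * (\<Sum>i\<in>UNIV. G i l i))
      - (\<Sum>a\<in>UNIV. \<Sum>b\<in>UNIV. Gi a b * (\<Sum>m\<in>UNIV. Gs a b m * f m))"
  proof -
    have "(\<Sum>i\<in>UNIV. dP i i) = (\<Sum>i\<in>UNIV. (\<Sum>k\<in>UNIV. Gi i k * df i k) - (\<Sum>k\<in>UNIV. Gi i k * (\<Sum>l\<in>UNIV. P l * dg i l k)))"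
      by (simp add: dP_def right_diff_distrib sum_subtractf)
    also have "\<dots> = (\<Sum>i\<in>UNIV. (\<Sum>k\<in>UNIV. Gi i k * df i k) - (\<Sum>l\<in>UNIV. P l * G i l i) - (\<Sum>k\<in>UNIV. Gi i k * (\<Sum>m\<in>UNIV. Gs i k m * f m)))"
      by (simp only: U diff_diff_eq)
    also have "(\<Sum>i\<in>UNIV. \<Sum>l\<in>UNIV. P l * G i l i) = (\<Sum>l\<in>UNIV. P l * (\<Sum>i\<in>UNIV. G i l i))"
      by (subst sum.swap) (simp add: sum_distrib_left)
    ultimately show ?thesis by (simp add: sum_subtractf)
  qed
  have TG: "(\<Sum>a\<in>UNIV. \<Sum>b\<in>UNIV. Gi a b * g a b) = n"
  proof -
    have "(\<Sum>a\<in>UNIV. \<Sum>b\<in>UNIV. Gi a b * g a b) = (\<Sum>a\<in>(UNIV::'n set). 1)"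
    proof (rule sum.cong[OF refl])
      fix a
      have "(\<Sum>b\<in>UNIV. Gi a b * g a b) = (\<Sum>b\<in>UNIV. Gi a b * g b a)"
        by (intro sum.cong refl arg_cong2[where f="(*)"] gs)
      also have "\<dots> = 1" using inv2[of a a] by simp
      finally show "(\<Sum>b\<in>UNIV. Gi a b * g a b) = 1" .
    qed
    thus ?thesis by (simp add: n_def)
  qed
  have T: "(\<Sum>a\<in>UNIV. \<Sum>b\<in>UNIV. Gi a b * E a b) = - s"
    unfolding E2 s_def T3 using T1
    by (simp add: right_diff_distrib sum_subtractf)
  have TR: "(\<Sum>a\<in>UNIV. \<Sum>b\<in>UNIV. Gi a b * ric H dH a b) = (\<Sum>a\<in>UNIV. \<Sum>b\<in>UNIV. Gi a b * ric G dG a b) + (\<Sum>a\<in>UNIV. \<Sum>b\<in>UNIV. Gi a b * E a b) + s * (\<Sum>a\<in>UNIV. \<Sum>b\<in>UNIV. Gi a b * g a b)"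
    unfolding RH by (simp add: distrib_left sum.distrib sum_distrib_left mult_ac)
  have TR': "(\<Sum>a\<in>UNIV. \<Sum>b\<in>UNIV. Gi a b * ric H dH a b) = (\<Sum>a\<in>UNIV. \<Sum>b\<in>UNIV. Gi a b * ric G dG a b) - s + s * n"
    using TR T TG by simp
  have Kq: "K j k = (\<Sum>l\<in>UNIV. G j k l * f l) - (\<Sum>l\<in>UNIV. Gs j k l * f l)" using Q[of j k] by simp
  show ?thesis
    unfolding n_def[symmetric]
    apply (subst TR')
    apply (simp only: RS RH)
    unfolding E_def Kq by (simp add: algebra_simps)
qed




lemma inv_props: "invertible (A::real^'n^'n) \<Longrightarrow> A ** matrix_inv A = mat 1 \<and> matrix_inv A ** A = mat 1"
  unfolding invertible_def matrix_inv_def by (rule someI_ex)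

lemma mm_entry: "(A ** B) $ i $ j = (\<Sum>k\<in>UNIV. A $ i $ k * B $ k $ j)"
  by (simp add: matrix_matrix_mult_def)

lemma inv_scale:
  fixes A :: "real^'n^'n"
  assumes "invertible A" "c \<noteq> 0"
  shows "matrix_inv (c *\<^sub>R A) = (1/c) *\<^sub>R matrix_inv A"
proof -
  let ?B = "matrix_inv (c *\<^sub>R A)"
  have "invertible (c *\<^sub>R A)" using scalar_invertible assms by blast
  hence B: "?B ** (c *\<^sub>R A) = mat 1" using inv_props by blast
  have A: "A ** matrix_inv A = mat 1" using inv_props assms(1) by blast
  have cA: "(c *\<^sub>R A) ** ((1/c) *\<^sub>R matrix_inv A) = mat 1"
    using A assms(2) by (simp add: matrix_scalar_ac vec_eq_iff matrix_matrix_mult_def sum_distrib_left mult_ac)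
  have "?B = ?B ** ((c *\<^sub>R A) ** ((1/c) *\<^sub>R matrix_inv A))" by (simp add: cA)
  also have "\<dots> = (?B ** (c *\<^sub>R A)) ** ((1/c) *\<^sub>R matrix_inv A)" by (rule matrix_mul_assoc)
  finally show ?thesis using B by simp
qed

lemma solve:
  fixes g Gi :: "'n::finite \<Rightarrow> 'n \<Rightarrow> real"
  assumes inv: "\<And>i j. (\<Sum>k\<in>UNIV. Gi i k * g k j) = (if i = j then 1 else 0)"
  and gs: "\<And>i j. g i j = g j i"
  and XY: "\<And>k. (\<Sum>l\<in>UNIV. X l * g l k) = Y k"
  shows "X m = (\<Sum>k\<in>UNIV. Gi m k * Y k)"
  using contract2[OF inv gs, of m X] XY by simp

lemma ricci_ric: "ricci G x j k = ric (G x) (\<lambda>a i j k. pd (\<lambda>y. G y i j k) a x) j k"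
  by (simp add: ricci_def riemann_def ric_def)

theorem theorem9p18:
  fixes U :: "(real^'n) set"
    and g :: "real^'n \<Rightarrow> 'n \<Rightarrow> 'n \<Rightarrow> real"
    and G Gs Gsh :: "real^'n \<Rightarrow> 'n \<Rightarrow> 'n \<Rightarrow> 'n \<Rightarrow> real"
    and q :: "real^'n \<Rightarrow> real"
  assumes "CARD('n) \<ge> 3"
    and "open U"
    and "pseudo_riemannian_on U g"
    and "connection_on U G" and "connection_on U Gs"
    and "torsion_free_on U G" and "torsion_free_on U Gs"
    and "conjugate_on U G g Gs"
    and "ricci_symmetric_on U Gs"
    and "smooth_fun_on U q" and "\<forall>x\<in>U. q x > 0"
    and "connection_on U Gsh"
    and "conjugate_on U Gsh (gauge_metric q g) (gauge_dual q Gs)"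
  shows "\<forall>x\<in>U. \<forall>j k. bform (gauge_metric q g) Gsh (gauge_dual q Gs) x j k = bform g G Gs x j k"
proof (intro ballI allI)
  fix x j k assume xU: "x \<in> U"
  note U = assms(2)
  have gsm: "\<And>i j. smooth_fun_on U (\<lambda>x. g x i j)" and gsym: "\<And>y i j. y \<in> U \<Longrightarrow> g y i j = g y j i"
    and ginv: "\<And>y. y \<in> U \<Longrightarrow> invertible (metric_matrix g y)"
    using assms(3) unfolding pseudo_riemannian_on_def by auto
  have Gsm: "\<And>i j k. smooth_fun_on U (\<lambda>x. G x i j k)" using assms(4) unfolding connection_on_def by auto
  have Gssm: "\<And>i j k. smooth_fun_on U (\<lambda>x. Gs x i j k)" using assms(5) unfolding connection_on_def by auto
  have Ghsm: "\<And>i j k. smooth_fun_on U (\<lambda>x. Gsh x i j k)" using assms(12) unfolding connection_on_def by auto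
  have tfG: "\<And>y i j k. y \<in> U \<Longrightarrow> G y i j k = G y j i k" using assms(6) unfolding torsion_free_on_def by auto
  have tfGs: "\<And>y i j k. y \<in> U \<Longrightarrow> Gs y i j k = Gs y j i k" using assms(7) unfolding torsion_free_on_def by auto
  have conj: "\<And>y i j k. y \<in> U \<Longrightarrow> pd (\<lambda>z. g z j k) i y = (\<Sum>l\<in>UNIV. G y i j l * g y l k) + (\<Sum>l\<in>UNIV. Gs y i k l * g y j l)"
    using assms(8) unfolding conjugate_on_def by auto
  have conjh: "\<And>y i j k. y \<in> U \<Longrightarrow> pd (\<lambda>z. gauge_metric q g z j k) i y =
      (\<Sum>l\<in>UNIV. Gsh y i j l * gauge_metric q g y l k) + (\<Sum>l\<in>UNIV. gauge_dual q Gs y i k l * gauge_metric q g y j l)"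
    using assms(13) unfolding conjugate_on_def by auto
  have qpos: "\<And>y. y \<in> U \<Longrightarrow> q y > 0" using assms(11) by auto
  have qd: "\<And>y. y \<in> U \<Longrightarrow> q differentiable at y" using smooth_diff[OF assms(10) U] .
  have gd: "\<And>y i j. y \<in> U \<Longrightarrow> (\<lambda>z. g z i j) differentiable at y" using smooth_diff[OF gsm U] .
  have Gd: "\<And>y i j k. y \<in> U \<Longrightarrow> (\<lambda>z. G z i j k) differentiable at y" using smooth_diff[OF Gsm U] .
  have Gsd: "\<And>y i j k. y \<in> U \<Longrightarrow> (\<lambda>z. Gs z i j k) differentiable at y" using smooth_diff[OF Gssm U] .
  have Ghd: "\<And>y i j k. y \<in> U \<Longrightarrow> (\<lambda>z. Gsh z i j k) differentiable at y" using smooth_diff[OF Ghsm U] .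
  have phid: "\<And>y i. y \<in> U \<Longrightarrow> pd (\<lambda>z. ln (q z)) i y = pd q i y / q y"
    using pd_ln(1)[OF qd qpos] .
  have lnd: "\<forall>y\<in>U. (\<lambda>z. ln (q z)) differentiable at y" using pd_ln(2)[OF qd qpos] by blast
  have phi_d: "pd (\<lambda>z. ln (q z)) i differentiable at x" for i
  proof -
    have "(\<lambda>y. pd q i y / q y) differentiable at x"
      using smooth_diff[OF smooth_pd[OF assms(10)] U xU] qd[OF xU] qpos[OF xU]
      by (intro differentiable_divide) auto
    then show ?thesis using pd_cong(2)[OF U xU, of "\<lambda>y. pd q i y / q y" "pd (\<lambda>z. ln (q z)) i"] phid by auto
  qed
  have R: "(\<Sum>l\<in>UNIV. Gsh y i j l * g y l k) = (\<Sum>l\<in>UNIV. G y i j l * g y l k) - pd (\<lambda>z. ln (q z)) k y * g y i j"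
    if yU: "y \<in> U" for y i j k
  proof -
    have qy: "q y > 0" using qpos yU .
    have pq: "pd q i y = q y * pd (\<lambda>z. ln (q z)) i y" using phid[OF yU, of i] qy by simp
    have lhs: "pd (\<lambda>z. gauge_metric q g z j k) i y = q y * ((\<Sum>l\<in>UNIV. G y i j l * g y l k) + (\<Sum>l\<in>UNIV. Gs y i k l * g y j l))
       + q y * pd (\<lambda>z. ln (q z)) i y * g y j k"
      unfolding gauge_metric_def pd_mult[OF qd[OF yU] gd[OF yU]] conj[OF yU] pq by simp
    have rhs: "(\<Sum>l\<in>UNIV. Gsh y i j l * gauge_metric q g y l k) + (\<Sum>l\<in>UNIV. gauge_dual q Gs y i k l * gauge_metric q g y j l)
      = q y * (\<Sum>l\<in>UNIV. Gsh y i j l * g y l k) + q y * ((\<Sum>l\<in>UNIV. Gs y i k l * g y j l)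
          + pd (\<lambda>z. ln (q z)) i y * g y j k + pd (\<lambda>z. ln (q z)) k y * g y j i)"
      unfolding gauge_metric_def gauge_dual_def
      by (simp add: distrib_left distrib_right sum.distrib sum_distrib_left mult_if1 mult_if2 mult_ac)
    have "q y * (\<Sum>l\<in>UNIV. Gsh y i j l * g y l k) = q y * ((\<Sum>l\<in>UNIV. G y i j l * g y l k) - pd (\<lambda>z. ln (q z)) k y * g y i j)"
      using conjh[OF yU, of j k i] lhs rhs gsym[OF yU, of j i] by (simp add: algebra_simps)
    thus ?thesis using qy by simp
  qed
  define Gi where "Gi a b = inv_metric g x $ a $ b" for a b
  define dg where "dg a b c = pd (\<lambda>y. g y b c) a x" for a b c
  define f where "f k = pd (\<lambda>z. ln (q z)) k x" for k
  define df where "df a b = pd (pd (\<lambda>z. ln (q z)) b) a x" for a b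
  define P where "P m = (\<Sum>k\<in>UNIV. Gi m k * f k)" for m
  define dP where "dP a m = (\<Sum>k\<in>UNIV. Gi m k * (df a k - (\<Sum>l\<in>UNIV. P l * dg a l k)))" for a m
  define dG where "dG a i j k = pd (\<lambda>y. G y i j k) a x" for a i j k
  define dGs where "dGs a i j k = pd (\<lambda>y. Gs y i j k) a x" for a i j k
  have gsx: "g x a b = g x b a" for a b using gsym[OF xU] .
  have invx: "metric_matrix g x ** matrix_inv (metric_matrix g x) = mat 1 \<and> matrix_inv (metric_matrix g x) ** metric_matrix g x = mat 1"
    using inv_props[OF ginv[OF xU]] .
  have inv1: "(\<Sum>k\<in>UNIV. g x a k * Gi k b) = (if a = b then 1 else 0)" for a b
  proof -
    have "(metric_matrix g x ** matrix_inv (metric_matrix g x)) $ a $ b = mat 1 $ a $ b" using invx by simp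
    thus ?thesis by (simp add: mm_entry Gi_def inv_metric_def metric_matrix_def mat_def)
  qed
  have inv2: "(\<Sum>k\<in>UNIV. Gi a k * g x k b) = (if a = b then 1 else 0)" for a b
  proof -
    have "(matrix_inv (metric_matrix g x) ** metric_matrix g x) $ a $ b = mat 1 $ a $ b" using invx by simp
    thus ?thesis by (simp add: mm_entry Gi_def inv_metric_def metric_matrix_def mat_def)
  qed
  have dgs: "dg a b c = dg a c b" for a b c
    unfolding dg_def by (rule pd_cong(1)[OF U xU _ gd[OF xU]]) (rule gsym)
  have C1: "dg a b c = (\<Sum>l\<in>UNIV. G x a b l * g x l c) + (\<Sum>l\<in>UNIV. Gs x a c l * g x b l)" for a b c
    unfolding dg_def by (rule conj[OF xU])
  have tfx: "G x a b c = G x b a c" for a b c using tfG[OF xU] .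
  have tfsx: "Gs x a b c = Gs x b a c" for a b c using tfGs[OF xU] .
  have dfs: "df a b = df b a" for a b
    unfolding df_def by (rule schwarz[OF U xU lnd phi_d phi_d])
  have Ghx: "Gsh x i j m = G x i j m - g x i j * P m" for i j m
  proof -
    have "Gsh x i j m = (\<Sum>k\<in>UNIV. Gi m k * ((\<Sum>l\<in>UNIV. G x i j l * g x l k) - f k * g x i j))"
      by (rule solve[OF inv2 gsx]) (simp add: R[OF xU] f_def)
    also have "\<dots> = (\<Sum>k\<in>UNIV. Gi m k * (\<Sum>l\<in>UNIV. G x i j l * g x l k)) - g x i j * P m"
      by (simp add: right_diff_distrib sum_subtractf P_def sum_distrib_left mult_ac)
    also have "\<dots> = G x i j m - g x i j * P m" by (simp only: contract2[OF inv2 gsx])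
    finally show ?thesis .
  qed
  have dGhx: "pd (\<lambda>y. Gsh y i j m) a x = dG a i j m - dg a i j * P m - g x i j * dP a m" for a i j m
  proof -
    have Y: "(\<Sum>l\<in>UNIV. pd (\<lambda>y. Gsh y i j l) a x * g x l k) =
      (\<Sum>l\<in>UNIV. dG a i j l * g x l k) + g x i j * (\<Sum>l\<in>UNIV. P l * dg a l k) - f k * dg a i j - df a k * g x i j" for k
    proof -
      have d1: "(\<lambda>y. \<Sum>l\<in>UNIV. Gsh y i j l * g y l k) differentiable at x"
        using Ghd[OF xU] gd[OF xU] by (intro differentiable_sum differentiable_mult) auto
      have "pd (\<lambda>y. \<Sum>l\<in>UNIV. Gsh y i j l * g y l k) a x = pd (\<lambda>y. (\<Sum>l\<in>UNIV. G y i j l * g y l k) - pd (\<lambda>z. ln (q z)) k y * g y i j) a x"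
        by (rule pd_cong(1)[OF U xU _ d1]) (rule R)
      moreover have "pd (\<lambda>y. \<Sum>l\<in>UNIV. Gsh y i j l * g y l k) a x = (\<Sum>l\<in>UNIV. Gsh x i j l * dg a l k + pd (\<lambda>y. Gsh y i j l) a x * g x l k)"
        using Ghd[OF xU] gd[OF xU]
        by (simp add: pd_sum differentiable_mult pd_mult dg_def)
      moreover have "pd (\<lambda>y. (\<Sum>l\<in>UNIV. G y i j l * g y l k) - pd (\<lambda>z. ln (q z)) k y * g y i j) a x
         = (\<Sum>l\<in>UNIV. G x i j l * dg a l k + dG a i j l * g x l k) - (f k * dg a i j + df a k * g x i j)"
        using Gd[OF xU] gd[OF xU] phi_d
        by (simp add: pd_diff pd_sum differentiable_mult differentiable_sum pd_mult dg_def dG_def f_def df_def)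
      ultimately have "(\<Sum>l\<in>UNIV. Gsh x i j l * dg a l k) + (\<Sum>l\<in>UNIV. pd (\<lambda>y. Gsh y i j l) a x * g x l k)
          = (\<Sum>l\<in>UNIV. G x i j l * dg a l k) + (\<Sum>l\<in>UNIV. dG a i j l * g x l k) - (f k * dg a i j + df a k * g x i j)"
        by (simp add: sum.distrib)
      moreover have "(\<Sum>l\<in>UNIV. Gsh x i j l * dg a l k) = (\<Sum>l\<in>UNIV. G x i j l * dg a l k) - g x i j * (\<Sum>l\<in>UNIV. P l * dg a l k)"
        by (simp add: Ghx left_diff_distrib right_diff_distrib sum_subtractf sum_distrib_left mult_ac)
      ultimately show ?thesis by (simp add: algebra_simps)
    qed
    have "pd (\<lambda>y. Gsh y i j m) a x = (\<Sum>k\<in>UNIV. Gi m k * ((\<Sum>l\<in>UNIV. dG a i j l * g x l k) + g x i j * (\<Sum>l\<in>UNIV. P l * dg a l k) - f k * dg a i j - df a k * g x i j))"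
      by (rule solve[OF inv2 gsx Y])
    also have "\<dots> = (\<Sum>k\<in>UNIV. Gi m k * (\<Sum>l\<in>UNIV. dG a i j l * g x l k)) - dg a i j * P m
        - g x i j * (\<Sum>k\<in>UNIV. Gi m k * (df a k - (\<Sum>l\<in>UNIV. P l * dg a l k)))"
      by (simp add: distrib_left right_diff_distrib sum.distrib sum_subtractf P_def sum_distrib_left sum_distrib_right mult_ac)
    also have "\<dots> = dG a i j m - dg a i j * P m - g x i j * dP a m"
      by (simp only: contract2[OF inv2 gsx] dP_def)
    finally show ?thesis .
  qed
  have H_eq: "Gsh x = (\<lambda>i j k. G x i j k + (- g x i j * P k))" by (intro ext) (simp add: Ghx)
  have dH_eq: "(\<lambda>a i j k. pd (\<lambda>y. Gsh y i j k) a x) = (\<lambda>a i j k. dG a i j k + (- dg a i j * P k - g x i j * dP a k))"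
    by (intro ext) (simp add: dGhx)
  have Hs_eq: "gauge_dual q Gs x = (\<lambda>i j k. Gs x i j k + Ad f i j k)"
    by (intro ext) (simp add: gauge_dual_def Ad_def f_def add.assoc)
  have dHs_eq: "(\<lambda>a i j k. pd (\<lambda>y. gauge_dual q Gs y i j k) a x) = (\<lambda>a i j k. dGs a i j k + Ad (df a) i j k)"
  proof (intro ext)
    fix a i j k
    have e: "(\<lambda>y. gauge_dual q Gs y i j k) = (\<lambda>y. (Gs y i j k + pd (\<lambda>z. ln (q z)) i y * (if k = j then 1 else 0))
                 + pd (\<lambda>z. ln (q z)) j y * (if k = i then 1 else 0))"
      by (simp add: gauge_dual_def fun_eq_iff)
    have d1: "(\<lambda>y. Gs y i j k + pd (\<lambda>z. ln (q z)) i y * (if k = j then 1 else 0)) differentiable at x"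
      using Gsd[OF xU] phi_d by (intro differentiable_add differentiable_mult) auto
    have d2: "(\<lambda>y. pd (\<lambda>z. ln (q z)) j y * (if k = i then 1 else 0)) differentiable at x"
      using phi_d by (intro differentiable_mult) auto
    show "pd (\<lambda>y. gauge_dual q Gs y i j k) a x = dGs a i j k + Ad (df a) i j k"
      unfolding e pd_add[OF d1 d2] pd_add[OF Gsd[OF xU] differentiable_mult[OF phi_d differentiable_const]]
        pd_multc[OF phi_d]
      by (simp add: dGs_def Ad_def df_def add.assoc)
  qed
  have mm: "metric_matrix (gauge_metric q g) x = q x *\<^sub>R metric_matrix g x"
    by (simp add: vec_eq_iff metric_matrix_def gauge_metric_def)
  have im: "inv_metric (gauge_metric q g) x = (1 / q x) *\<^sub>R inv_metric g x"
    unfolding inv_metric_def mm using inv_scale[OF ginv[OF xU]] qpos[OF xU] by simp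
  have sc: "scalar_curv (gauge_metric q g) Gsh x = (\<Sum>a\<in>UNIV. \<Sum>b\<in>UNIV. Gi a b * ricci Gsh x a b) / q x"
    unfolding scalar_curv_def im by (simp add: Gi_def sum_divide_distrib)
  have sc0: "scalar_curv g G x = (\<Sum>a\<in>UNIV. \<Sum>b\<in>UNIV. Gi a b * ricci G x a b)"
    unfolding scalar_curv_def Gi_def ..
  have rH: "ricci Gsh x a b = ric (\<lambda>i j k. G x i j k + (- g x i j * P k)) (\<lambda>a i j k. dG a i j k + (- dg a i j * P k - g x i j * dP a k)) a b" for a b
    unfolding ricci_ric H_eq dH_eq ..
  have rHs: "ricci (gauge_dual q Gs) x j k = ric (\<lambda>i j k. Gs x i j k + Ad f i j k) (\<lambda>a i j k. dGs a i j k + Ad (df a) i j k) j k"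
    unfolding ricci_ric Hs_eq dHs_eq ..
  have rG: "ricci G x a b = ric (G x) dG a b" for a b unfolding ricci_ric dG_def ..
  have rGs: "ricci Gs x j k = ric (Gs x) dGs j k" unfolding ricci_ric dGs_def ..
  note MA = main_alg[OF gsx inv1 inv2 dgs C1 tfx tfsx dfs P_def dP_def refl refl refl refl, where dG=dG and dGs=dGs and j=j and k=k]
  have qx: "q x \<noteq> 0" using qpos[OF xU] by simp
  show "bform (gauge_metric q g) Gsh (gauge_dual q Gs) x j k = bform g G Gs x j k"
    unfolding bform_def sc sc0 rH rHs rG rGs using MA qx
    by (simp add: gauge_metric_def)
qed


end
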